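(* Let $U=\begin{pmatrix} a & b\\ c & d\end{pmatrix}$ be a $2\times 2$ unitary matrix with $abcd\neq 0$, let $\triangle=\det U=ad-bc$, and let $P=\begin{pmatrix} a & b\\ 0&0\end{pmatrix}$, $Q=\begin{pmatrix} 0&0\\ c & d\end{pmatrix}$, $R=\begin{pmatrix} c & d\\ 0&0\end{pmatrix}$, $S=\begin{pmatrix} 0&0\\ a & b\end{pmatrix}$. For integers $l,m\ge 0$ with $l+m=n\ge 1$, let $\Xi(l,m)$ denote the sum of all products $M_1M_2\cdots M_n$ with each $M_j\in\{P,Q\}$, in which exactly $l$ factors equal $P$ and exactly $m$ factors equal $Q$ (one term for each such word). Then: (i) if $\min\{l,m\}\ge 1$, $$\Xi(l,m)=a^l\,\overline{a}^{\,m}\,\triangle^m\sum_{\gamma=1}^{\min\{l,m\}}\left(-\frac{|b|^2}{|a|^2}\right)^{\gamma}\binom{l-1}{\gamma-1}\binom{m-1}{\gamma-1}\left[\frac{l-\gamma}{a\gamma}P+\frac{m-\gamma}{\triangle\,\overline{a}\,\gamma}Q-\frac{1}{\triangle\,\overline{b}}R+\frac{1}{b}S\right];$$ (ii) if $l=n\ge 1$ and $m=0$, then $\Xi(l,0)=a^{l-1}P$; (iii) if $l=0$ and $m=n\ge 1$, then $\Xi(0,m)=\triangle^{m-1}\overline{a}^{\,m-1}Q$.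
   Context: $\overline{z}$ denotes the complex conjugate of $z\in\mathbf{C}$. Unitarity of $U$ gives $|a|^2+|b|^2=|c|^2+|d|^2=1$, $a\overline c+b\overline d=0$, $c=-\triangle\overline{b}$, $d=\triangle\overline{a}$, $|\triangle|=1$. *)

theory Defs
  imports "HOL-Analysis.Analysis"
begin

text \<open>The 2x2 complex matrix with rows (x, y) and (z, w).\<close>
definition mat2 :: "complex \<Rightarrow> complex \<Rightarrow> complex \<Rightarrow> complex \<Rightarrow> complex^2^2" where
  "mat2 x y z w = (\<chi> i j. if i = 1 then (if j = 1 then x else y) else (if j = 1 then z else w))"

text \<open>Conjugate transpose and unitarity.\<close>
definition adjoint2 :: "complex^2^2 \<Rightarrow> complex^2^2" where
  "adjoint2 M = (\<chi> i j. cnj (M $ j $ i))"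

definition unitary2 :: "complex^2^2 \<Rightarrow> bool" where
  "unitary2 M \<longleftrightarrow> adjoint2 M ** M = mat 1 \<and> M ** adjoint2 M = mat 1"

text \<open>Scalar multiple of a complex matrix.\<close>
definition cscale :: "complex \<Rightarrow> complex^2^2 \<Rightarrow> complex^2^2" where
  "cscale k M = (\<chi> i j. k * M $ i $ j)"

text \<open>Xi(l,m): sum over all words in {P,Q} of length l+m with exactly l letters P
  (True encodes P, False encodes Q) of the ordered product M_1 M_2 ... M_n.\<close>
definition Xi :: "complex^2^2 \<Rightarrow> complex^2^2 \<Rightarrow> nat \<Rightarrow> nat \<Rightarrow> complex^2^2" where
  "Xi P Q l m = (\<Sum>w\<in>{w :: bool list. length w = l + m \<and> length (filter id w) = l}.
      foldr (**) (map (\<lambda>x. if x then P else Q) w) (mat 1))"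

end

theory Submission
  imports Defs
begin

lemma mat2_eq: "mat2 x y z w = mat2 x' y' z' w' \<longleftrightarrow> x = x' \<and> y = y' \<and> z = z' \<and> w = w'"
  by (auto simp: mat2_def vec_eq_iff forall_2)

lemma mat2_add: "mat2 x y z w + mat2 x' y' z' w' = mat2 (x+x') (y+y') (z+z') (w+w')"
  by (auto simp: mat2_def vec_eq_iff forall_2)

lemma mat2_mult: "mat2 x y z w ** mat2 x' y' z' w' = mat2 (x*x'+y*z') (x*y'+y*w') (z*x'+w*z') (z*y'+w*w')"
  by (auto simp: mat2_def vec_eq_iff forall_2 matrix_matrix_mult_def UNIV_2)

lemma cscale_mat2: "cscale k (mat2 x y z w) = mat2 (k*x) (k*y) (k*z) (k*w)"
  by (auto simp: mat2_def cscale_def vec_eq_iff forall_2)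

lemma mat2_zero: "(0::complex^2^2) = mat2 0 0 0 0"
  by (auto simp: mat2_def vec_eq_iff forall_2)

lemma mat2_one: "(mat 1::complex^2^2) = mat2 1 0 0 1"
  by (auto simp: mat2_def mat_def vec_eq_iff forall_2)

lemma mat2_diff: "mat2 x y z w - mat2 x' y' z' w' = mat2 (x-x') (y-y') (z-z') (w-w')"
  by (auto simp: mat2_def vec_eq_iff forall_2)

lemma mult_sum_right: "finite A \<Longrightarrow> (M::complex^2^2) ** (\<Sum>x\<in>A. f x) = (\<Sum>x\<in>A. M ** f x)"
  by (induction A rule: finite_induct) (auto simp: matrix_add_ldistrib)

lemma adjoint2_mat2: "adjoint2 (mat2 a b c d) = mat2 (cnj a) (cnj c) (cnj b) (cnj d)"
  by (auto simp: adjoint2_def mat2_def vec_eq_iff forall_2)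

lemma sum_mat2: "(\<Sum>i\<in>A. mat2 (f i) (g i) (h i) (k i)) = mat2 (\<Sum>i\<in>A. f i) (\<Sum>i\<in>A. g i) (\<Sum>i\<in>A. h i) (\<Sum>i\<in>A. k i)"
  by (induction A rule: infinite_finite_induct) (auto simp: mat2_zero mat2_add)

definition W :: "nat \<Rightarrow> nat \<Rightarrow> bool list set" where
  "W l m = {w. length w = l + m \<and> length (filter id w) = l}"

lemma W_fin: "finite (W l m)"
  unfolding W_def by (rule finite_subset[OF _ finite_list_length[of "l+m"]]) auto

lemma Xi_W: "Xi P Q l m = (\<Sum>w\<in>W l m. foldr (**) (map (\<lambda>x. if x then P else Q) w) (mat 1))"
  unfolding Xi_def W_def ..

lemma W_Cons: "x # w \<in> W l m \<longleftrightarrow> (if x then l \<noteq> 0 \<and> w \<in> W (l - 1) m else m \<noteq> 0 \<and> w \<in> W l (m - 1))"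
  unfolding W_def using length_filter_le[of id w] by (cases x; cases l; cases m) (auto simp del: length_filter_le)

lemma W_Nil: "[] \<in> W l m \<longleftrightarrow> l = 0 \<and> m = 0"
  unfolding W_def by auto

lemma W_SS: "W (Suc l) (Suc m) = Cons True ` W l (Suc m) \<union> Cons False ` W (Suc l) m"
proof (intro set_eqI iffI)
  fix w assume w: "w \<in> W (Suc l) (Suc m)"
  then obtain x w' where e: "w = x # w'" by (cases w) (auto simp: W_Nil)
  show "w \<in> Cons True ` W l (Suc m) \<union> Cons False ` W (Suc l) m"
    using w unfolding e W_Cons by (cases x) auto
next
  fix w assume "w \<in> Cons True ` W l (Suc m) \<union> Cons False ` W (Suc l) m"
  then show "w \<in> W (Suc l) (Suc m)" by (auto simp: W_Cons)
qed

lemma W_S0: "W (Suc l) 0 = Cons True ` W l 0"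
proof (intro set_eqI iffI)
  fix w assume w: "w \<in> W (Suc l) 0"
  then obtain x w' where e: "w = x # w'" by (cases w) (auto simp: W_Nil)
  show "w \<in> Cons True ` W l 0"
    using w unfolding e W_Cons by (cases x) auto
next
  fix w assume "w \<in> Cons True ` W l 0"
  then show "w \<in> W (Suc l) 0" by (auto simp: W_Cons)
qed

lemma W_0S: "W 0 (Suc m) = Cons False ` W 0 m"
proof (intro set_eqI iffI)
  fix w assume w: "w \<in> W 0 (Suc m)"
  then obtain x w' where e: "w = x # w'" by (cases w) (auto simp: W_Nil)
  show "w \<in> Cons False ` W 0 m"
    using w unfolding e W_Cons by (cases x) auto
next
  fix w assume "w \<in> Cons False ` W 0 m"
  then show "w \<in> W 0 (Suc m)" by (auto simp: W_Cons)
qed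

lemma sum_Cons: "(\<Sum>w\<in>Cons x ` A. foldr (**) (map (\<lambda>x. if x then P else Q) w) (mat 1))
   = (if x then P else Q) ** (\<Sum>w\<in>A. foldr (**) (map (\<lambda>x. if x then P else Q) w) (mat 1 :: complex^2^2))"
proof -
  have "(\<Sum>w\<in>Cons x ` A. foldr (**) (map (\<lambda>x. if x then P else Q) w) (mat 1))
     = (\<Sum>w\<in>A. foldr (**) (map (\<lambda>x. if x then P else Q) (x # w)) (mat 1 :: complex^2^2))"
    by (subst sum.reindex) (auto intro: inj_onI)
  also have "\<dots> = (\<Sum>w\<in>A. (if x then P else Q) ** foldr (**) (map (\<lambda>x. if x then P else Q) w) (mat 1))"
    by simp
  also have "\<dots> = (if x then P else Q) ** (\<Sum>w\<in>A. foldr (**) (map (\<lambda>x. if x then P else Q) w) (mat 1))"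
    by (induction A rule: infinite_finite_induct) (simp_all add: matrix_add_ldistrib)
  finally show ?thesis .
qed

lemma Xi_SS: "Xi P Q (Suc l) (Suc m) = P ** Xi P Q l (Suc m) + Q ** Xi P Q (Suc l) m"
proof -
  have d: "Cons True ` W l (Suc m) \<inter> Cons False ` W (Suc l) m = {}" by auto
  show ?thesis
    unfolding Xi_W W_SS sum.union_disjoint[OF finite_imageI[OF W_fin] finite_imageI[OF W_fin] d]
    unfolding sum_Cons by simp
qed

lemma Xi_S0: "Xi P Q (Suc l) 0 = P ** Xi P Q l 0"
  unfolding Xi_W W_S0 sum_Cons by simp

lemma Xi_0S: "Xi P Q 0 (Suc m) = Q ** Xi P Q 0 m"
  unfolding Xi_W W_0S sum_Cons by simp

lemma Xi_00: "Xi P Q 0 0 = mat 1"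
proof -
  have "W 0 0 = {[]}" unfolding W_def by auto
  then show ?thesis unfolding Xi_W by simp
qed

fun cpn :: "nat \<Rightarrow> nat \<Rightarrow> nat" where
  "cpn 0 k = (if k = 0 then 1 else 0)"
| "cpn (Suc n) 0 = 0"
| "cpn (Suc n) (Suc k) = n choose k"

lemma comp_rec: "cpn (Suc n) (Suc k) = cpn n (Suc k) + cpn n k"
  by (cases n; cases k) auto

lemma comp_big: "n < k \<Longrightarrow> cpn n k = 0"
  by (cases n; cases k) auto

definition SA :: "complex \<Rightarrow> nat \<Rightarrow> nat \<Rightarrow> nat \<Rightarrow> complex" where
  "SA t N l m = (\<Sum>k\<le>N. of_nat (cpn l (Suc k) * cpn m k) * t ^ k)"
definition SC :: "complex \<Rightarrow> nat \<Rightarrow> nat \<Rightarrow> nat \<Rightarrow> complex" where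
  "SC t N l m = (\<Sum>k\<le>N. of_nat (cpn l k * cpn m k) * t ^ k)"

lemma SA_min: "min l m \<le> N \<Longrightarrow> SA t N l m = SA t (min l m) l m"
  unfolding SA_def
  by (rule sum.mono_neutral_right) (auto simp: comp_big)

lemma SC_min: "min l m \<le> N \<Longrightarrow> SC t N l m = SC t (min l m) l m"
  unfolding SC_def
  by (rule sum.mono_neutral_right) (auto simp: comp_big)

definition "AA t l m = SA t (l+m) l m"
definition "CC t l m = SC t (l+m) l m"

lemma AA_eq: "min l m \<le> N \<Longrightarrow> AA t l m = SA t N l m"
  unfolding AA_def by (metis SA_min le_add1 min.coboundedI1)
lemma CC_eq: "min l m \<le> N \<Longrightarrow> CC t l m = SC t N l m"
  unfolding CC_def by (metis SC_min le_add1 min.coboundedI1)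

lemma SC_sym: "SC t N l m = SC t N m l"
  unfolding SC_def by (simp add: mult.commute)

lemma I1: "SA t N (Suc l) m = SA t N l m + SC t N l m"
  unfolding SA_def SC_def sum.distrib[symmetric]
  by (rule sum.cong[OF refl], simp only: comp_rec) (simp add: algebra_simps)

lemma I2: "l \<noteq> 0 \<or> m \<noteq> 0 \<Longrightarrow> SC t (Suc N) (Suc l) m = t * SA t N m l + SC t (Suc N) l m"
  unfolding SA_def SC_def
  apply (simp only: sum.atMost_Suc_shift sum_distrib_left)
  apply (subgoal_tac "cpn l 0 * cpn m 0 = 0")
   apply (simp only: comp_rec add_mult_distrib of_nat_add of_nat_0 mult_zero_left distrib_right sum.distrib)
   apply (simp add: algebra_simps)
  apply (cases l; cases m; simp)
  done

lemma AA_0: "AA t 0 m = 0"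
  unfolding AA_def SA_def by simp

lemma AA_S: "AA t (Suc l) m = AA t l m + CC t l m"
  using I1[of t "Suc (l+m)" l m]
  by (simp add: AA_eq[of _ _ "Suc (l+m)"] CC_eq[of _ _ "Suc (l+m)"])

lemma CC_sym: "CC t l m = CC t m l"
  unfolding CC_def by (simp add: SC_sym add.commute)

lemma CC_S: "l \<noteq> 0 \<or> m \<noteq> 0 \<Longrightarrow> CC t (Suc l) m = t * AA t m l + CC t l m"
  using I2[of l m t "Suc (l+m)"]
  by (simp add: AA_eq[of _ _ "Suc (l+m)"] CC_eq[of _ _ "Suc (Suc (l+m))"])

locale gen =
  fixes a b c d :: complex
  assumes a0: "a \<noteq> 0" and b0: "b \<noteq> 0" and c0: "c \<noteq> 0" and d0: "d \<noteq> 0"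
begin

definition "t = b * c / (a * d)"
definition "al l m = a^(l-1) * d^m * AA t l m"
definition "be l m = a^l * d^(m-1) * AA t m l"
definition "rh l m = a^l * d^m * CC t l m / c"
definition "si l m = a^l * d^m * CC t l m / b"

definition "GG x y z w = cscale x (mat2 a b 0 0) + cscale y (mat2 0 0 c d) + cscale z (mat2 c d 0 0) + cscale w (mat2 0 0 a b)"

lemma GG_mat2: "GG x y z w = mat2 (x*a + z*c) (x*b+z*d) (y*c+w*a) (y*d+w*b)"
  unfolding GG_def by (simp add: cscale_mat2 mat2_add)

lemma P_GG: "mat2 a b 0 0 ** GG x y z w = GG (a*x+b*w) 0 (b*y+a*z) 0"
  unfolding GG_mat2 mat2_mult mat2_eq by (simp add: algebra_simps)

lemma Q_GG: "mat2 0 0 c d ** GG x y z w = GG 0 (d*y+c*z) 0 (c*x+d*w)"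
  unfolding GG_mat2 mat2_mult mat2_eq by (simp add: algebra_simps)

lemma GG_add: "GG x y z w + GG x' y' z' w' = GG (x+x') (y+y') (z+z') (w+w')"
  unfolding GG_mat2 mat2_add mat2_eq by (simp add: algebra_simps)

lemma lin:
  "cscale K (\<Sum>i\<in>A. cscale (e i) (cscale (x i) (mat2 a b 0 0) + cscale (y i) (mat2 0 0 c d)
      - cscale (z i) (mat2 c d 0 0) + cscale (w i) (mat2 0 0 a b)))
   = GG (K * (\<Sum>i\<in>A. e i * x i)) (K * (\<Sum>i\<in>A. e i * y i))
       (- (K * (\<Sum>i\<in>A. e i * z i))) (K * (\<Sum>i\<in>A. e i * w i))"
  unfolding GG_def
  by (simp add: cscale_mat2 mat2_add mat2_diff sum_mat2 mat2_eq sum_distrib_left sum_distrib_right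
      sum.distrib sum_subtractf algebra_simps)


lemma S1: "al (Suc l) m = a * al l m + b * si l m"
proof -
  have k: "a * (a^(l-1) * d^m * AA t l m) = a^l * d^m * AA t l m" by (cases l) (simp_all add: AA_0)
  have k2: "b * (a ^ l * d ^ m * CC t l m / b) = a ^ l * d ^ m * CC t l m" using b0 by simp
  show ?thesis unfolding al_def si_def
    by (simp only: AA_S k k2 distrib_left diff_Suc_1)
qed

lemma S2: assumes h: "l \<noteq> 0 \<or> m \<noteq> 0" shows "rh (Suc l) m = b * be l m + a * rh l m"
proof -
  have key: "a^(Suc l) * d^m * (t * AA t m l) / c = b * (a^l * d^(m-1) * AA t m l)"
  proof (cases m)
    case 0 then show ?thesis by (simp add: AA_0)
  next
    case (Suc m')
    then show ?thesis using a0 c0 d0 by (simp add: t_def field_simps)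
  qed
  have k2: "a * (a ^ l * d ^ m * CC t l m / c) = a^(Suc l) * d^m * CC t l m / c" by simp
  show ?thesis unfolding rh_def be_def CC_S[OF h] k2 key[symmetric]
    by (simp add: add_divide_distrib distrib_left)
qed

lemma S3: "be l (Suc m) = d * be l m + c * rh l m"
proof -
  have k: "d * (a^l * d^(m-1) * AA t m l) = a^l * d^m * AA t m l" by (cases m) (simp_all add: AA_0)
  have k2: "c * (a ^ l * d ^ m * CC t l m / c) = a ^ l * d ^ m * CC t m l" using c0 by (simp add: CC_sym)
  show ?thesis unfolding be_def rh_def
    by (simp only: AA_S k k2 distrib_left diff_Suc_1)
qed

lemma S4: assumes h: "l \<noteq> 0 \<or> m \<noteq> 0" shows "si l (Suc m) = c * al l m + d * si l m"
proof -
  have h': "m \<noteq> 0 \<or> l \<noteq> 0" using h by blast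
  have key: "a^l * d^(Suc m) * (t * AA t l m) / b = c * (a^(l-1) * d^m * AA t l m)"
  proof (cases l)
    case 0 then show ?thesis by (simp add: AA_0)
  next
    case (Suc l')
    then show ?thesis using a0 b0 d0 by (simp add: t_def field_simps)
  qed
  have k2: "d * (a ^ l * d ^ m * CC t l m / b) = a^l * d^(Suc m) * CC t m l / b" by (simp add: CC_sym)
  show ?thesis unfolding si_def al_def CC_sym[of t l "Suc m"] CC_S[OF h'] k2 key[symmetric]
    by (simp add: add_divide_distrib distrib_left)
qed

lemma CC_0S: "CC t 0 (Suc m) = 0"
  unfolding CC_def SC_def by (intro sum.neutral) auto

lemma Z1: "al 0 m = 0" "rh 0 (Suc m) = 0"
  unfolding al_def rh_def by (simp_all add: AA_0 CC_0S)

lemma Z2: "be l 0 = 0" "si (Suc l) 0 = 0"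
  unfolding be_def si_def by (simp_all add: AA_0 CC_0S CC_sym[of t _ 0])

lemma main: "l + m = Suc n \<Longrightarrow>
   Xi (mat2 a b 0 0) (mat2 0 0 c d) l m = GG (al l m) (be l m) (rh l m) (si l m)"
proof (induction n arbitrary: l m)
  case 0
  then consider "l = 1" "m = 0" | "l = 0" "m = 1" by linarith
  then show ?case
  proof cases
    case 1
    have "AA t 1 0 = 1" "CC t 1 0 = 0" "AA t 0 1 = 0"
      by (simp_all add: AA_def SA_def CC_def SC_def)
    with 1 show ?thesis
      by (simp add: Xi_S0[of _ _ 0, simplified] Xi_00 al_def be_def rh_def si_def GG_mat2 mat2_eq)
  next
    case 2
    have "AA t 1 0 = 1" "CC t 0 1 = 0" "AA t 0 1 = 0"
      by (simp_all add: AA_def SA_def CC_def SC_def)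
    with 2 show ?thesis
      by (simp add: Xi_0S[of _ _ 0, simplified] Xi_00 al_def be_def rh_def si_def GG_mat2 mat2_eq)
  qed
next
  case (Suc n)
  show ?case
  proof (cases l)
    case 0
    then obtain m' where m: "m = Suc m'" "m' = Suc n" using Suc.prems by auto
    show ?thesis using Suc.IH[of 0 m'] m 0
      by (simp add: Xi_0S Q_GG S3 S4 Z1)
  next
    case (Suc l')
    show ?thesis
    proof (cases m)
      case 0
      then have "l' = Suc n" using Suc \<open>l + m = Suc (Suc n)\<close> by auto
      then show ?thesis using Suc.IH[of l' 0] Suc 0
        by (simp add: Xi_S0 P_GG S1 S2 Z2)
    next
      case (Suc m')
      show ?thesis using Suc.IH[of l' "Suc m'"] Suc.IH[of "Suc l'" m'] \<open>l = Suc l'\<close> Suc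
        \<open>l + m = Suc (Suc n)\<close>
        by (simp add: Xi_SS P_GG Q_GG GG_add S1 S2 S3 S4)
    qed
  qed
qed

end

lemma binom_aux: "of_nat (Suc j) * of_nat (n choose Suc j) = (of_nat ((n - j) * (n choose j)) :: complex)"
proof -
  have "Suc j * (n choose Suc j) = (n - j) * (n choose j)"
  proof (cases n)
    case 0 then show ?thesis by simp
  next
    case (Suc n')
    then show ?thesis using Suc_times_binomial[of j n'] binomial_absorb_comp[of "Suc n'" j] by simp
  qed
  then show ?thesis by (metis of_nat_mult)
qed

lemma AA_formula:
  assumes "l \<ge> 1" "m \<ge> 1"
  shows "AA t l m = (\<Sum>g=1..min l m. t^g * of_nat ((l-1) choose (g-1)) * of_nat ((m-1) choose (g-1)) * of_nat (l-g) / of_nat g)"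
proof -
  have comp0: "cpn m 0 = 0" using assms by (cases m) auto
  have "AA t l m = SA t (min l m) l m" by (rule AA_eq) simp
  also have "\<dots> = (\<Sum>k\<in>insert 0 {1..min l m}. of_nat (cpn l (Suc k) * cpn m k) * t ^ k)"
    unfolding SA_def by (rule sum.cong) auto
  also have "\<dots> = (\<Sum>k=1..min l m. of_nat (cpn l (Suc k) * cpn m k) * t ^ k)"
    using assms by (subst sum.insert) (auto simp: comp0)
  also have "\<dots> = (\<Sum>g=1..min l m. t^g * of_nat ((l-1) choose (g-1)) * of_nat ((m-1) choose (g-1)) * of_nat (l-g) / of_nat g)"
  proof (rule sum.cong[OF refl])
    fix g assume g: "g \<in> {1..min l m}"
    then obtain j where j: "g = Suc j" by (cases g) auto
    obtain l' where l: "l = Suc l'" using assms by (cases l) auto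
    obtain m' where m: "m = Suc m'" using assms by (cases m) auto
    have "of_nat (Suc j) * of_nat (l' choose Suc j) = (of_nat ((l' - j) * (l' choose j)) :: complex)"
      by (rule binom_aux)
    then have e: "of_nat (l' choose Suc j) = (of_nat ((l' - j) * (l' choose j)) :: complex) / of_nat (Suc j)"
      by (simp add: field_simps del: of_nat_Suc)
    show "of_nat (cpn l (Suc g) * cpn m g) * t ^ g = t^g * of_nat ((l-1) choose (g-1)) * of_nat ((m-1) choose (g-1)) * of_nat (l-g) / of_nat g"
      unfolding j l m cpn.simps diff_Suc_Suc diff_Suc_1 of_nat_mult e
      by (simp del: of_nat_Suc of_nat_diff add: field_simps)
  qed
  finally show ?thesis .
qed

lemma CC_formula:
  assumes "l \<ge> 1" "m \<ge> 1"
  shows "CC t l m = (\<Sum>g=1..min l m. t^g * of_nat ((l-1) choose (g-1)) * of_nat ((m-1) choose (g-1)))"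
proof -
  have comp0: "cpn m 0 = 0" using assms by (cases m) auto
  have "CC t l m = SC t (min l m) l m" by (rule CC_eq) simp
  also have "\<dots> = (\<Sum>k\<in>insert 0 {1..min l m}. of_nat (cpn l k * cpn m k) * t ^ k)"
    unfolding SC_def by (rule sum.cong) auto
  also have "\<dots> = (\<Sum>k=1..min l m. of_nat (cpn l k * cpn m k) * t ^ k)"
    using assms by (subst sum.insert) (auto simp: comp0)
  also have "\<dots> = (\<Sum>g=1..min l m. t^g * of_nat ((l-1) choose (g-1)) * of_nat ((m-1) choose (g-1)))"
  proof (rule sum.cong[OF refl])
    fix g assume g: "g \<in> {1..min l m}"
    then obtain j where j: "g = Suc j" by (cases g) auto
    obtain l' where l: "l = Suc l'" using assms by (cases l) auto
    obtain m' where m: "m = Suc m'" using assms by (cases m) auto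
    show "of_nat (cpn l g * cpn m g) * t ^ g = t^g * of_nat ((l-1) choose (g-1)) * of_nat ((m-1) choose (g-1))"
      unfolding j l m by (simp del: of_nat_Suc add: algebra_simps)
  qed
  finally show ?thesis .
qed

theorem lemma1:
  fixes a b c d :: complex
  assumes unit: "unitary2 (mat2 a b c d)"
    and nz: "a * b * c * d \<noteq> 0"
  defines "\<Delta> \<equiv> a * d - b * c"
    and "P \<equiv> mat2 a b 0 0" and "Q \<equiv> mat2 0 0 c d"
    and "R \<equiv> mat2 c d 0 0" and "S \<equiv> mat2 0 0 a b"
  shows
    "(\<forall>l m. min l m \<ge> 1 \<longrightarrow>
        Xi P Q l m =
          cscale (a ^ l * cnj a ^ m * \<Delta> ^ m)
            (\<Sum>\<gamma>=1..min l m.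
               cscale ((- complex_of_real ((cmod b)\<^sup>2 / (cmod a)\<^sup>2)) ^ \<gamma>
                       * of_nat ((l - 1) choose (\<gamma> - 1)) * of_nat ((m - 1) choose (\<gamma> - 1)))
                 (cscale (of_nat (l - \<gamma>) / (a * of_nat \<gamma>)) P
                  + cscale (of_nat (m - \<gamma>) / (\<Delta> * cnj a * of_nat \<gamma>)) Q
                  - cscale (1 / (\<Delta> * cnj b)) R
                  + cscale (1 / b) S)))
     \<and> (\<forall>l. l \<ge> 1 \<longrightarrow> Xi P Q l 0 = cscale (a ^ (l - 1)) P)
     \<and> (\<forall>m. m \<ge> 1 \<longrightarrow> Xi P Q 0 m = cscale (\<Delta> ^ (m - 1) * cnj a ^ (m - 1)) Q)"
proof -
  have a0: "a \<noteq> 0" and b0: "b \<noteq> 0" and c0: "c \<noteq> 0" and d0: "d \<noteq> 0" using nz by auto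
  interpret g: gen a b c d using a0 b0 c0 d0 by unfold_locales
  have "mat2 a b c d ** adjoint2 (mat2 a b c d) = mat 1" using unit unfolding unitary2_def by simp
  then have u: "a * cnj a + b * cnj b = 1" "a * cnj c + b * cnj d = 0"
    unfolding adjoint2_mat2 mat2_mult mat2_one mat2_eq by auto
  have u2: "cnj a * c + cnj b * d = 0" using arg_cong[OF u(2), of cnj] by (simp add: mult.commute)
  then have u3: "cnj a * c = - (cnj b * d)" by (simp add: eq_neg_iff_add_eq_0)
  have dD: "d = \<Delta> * cnj a"
  proof -
    have "\<Delta> * cnj a = d * (a * cnj a) - b * (cnj a * c)" unfolding \<Delta>_def by (simp add: algebra_simps)
    also have "\<dots> = d * (a * cnj a) + b * (cnj b * d)" by (simp add: u3)
    also have "\<dots> = d * (a * cnj a + b * cnj b)" by (simp add: algebra_simps)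
    finally show ?thesis using u(1) by simp
  qed
  have cD: "c = - (\<Delta> * cnj b)"
  proof -
    have "\<Delta> * cnj b = a * (cnj b * d) - c * (b * cnj b)" unfolding \<Delta>_def by (simp add: algebra_simps)
    also have "\<dots> = - a * (cnj a * c) - c * (b * cnj b)" by (simp add: u3)
    also have "\<dots> = - c * (a * cnj a + b * cnj b)" by (simp add: algebra_simps)
    finally show ?thesis using u(1) by simp
  qed
  have D0: "\<Delta> \<noteq> 0" using dD d0 by auto
  have ca0: "cnj a \<noteq> 0" "cnj b \<noteq> 0" using a0 b0 by auto
  have tt: "g.t = - complex_of_real ((cmod b)\<^sup>2 / (cmod a)\<^sup>2)"
    unfolding g.t_def of_real_divide complex_norm_square
    apply (subst cD) apply (subst dD)
    using a0 D0 ca0 by (simp add: field_simps)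
  have K: "cnj a ^ m * \<Delta> ^ m = d ^ m" for m
    unfolding dD by (simp add: power_mult_distrib mult.commute)
  have GGP: "g.GG x 0 0 0 = cscale x P" for x
    unfolding g.GG_def P_def by (simp add: cscale_mat2 mat2_add mat2_zero[symmetric])
  have GGQ: "g.GG 0 x 0 0 = cscale x Q" for x
    unfolding g.GG_def Q_def by (simp add: cscale_mat2 mat2_add mat2_zero[symmetric])
  have part2: "Xi P Q l 0 = cscale (a ^ (l - 1)) P" if l: "l \<ge> 1" for l
  proof -
    obtain n where n: "l = Suc n" using l by (cases l) auto
    have "AA g.t l 0 = 1" using AA_eq[of l 0 0 g.t] n by (simp add: SA_def)
    moreover have "CC g.t l 0 = 0" using n CC_sym g.CC_0S by metis
    ultimately show ?thesis
      using g.main[of l 0 n] n unfolding P_def Q_def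
      by (simp add: g.al_def g.be_def g.rh_def g.si_def AA_0 GGP[unfolded P_def])
  qed
  have part3: "Xi P Q 0 m = cscale (\<Delta> ^ (m - 1) * cnj a ^ (m - 1)) Q" if m: "m \<ge> 1" for m
  proof -
    obtain n where n: "m = Suc n" using m by (cases m) auto
    have "AA g.t m 0 = 1" using AA_eq[of m 0 0 g.t] n by (simp add: SA_def)
    moreover have "CC g.t 0 m = 0" using n g.CC_0S by metis
    moreover have "\<Delta> ^ (m - 1) * cnj a ^ (m - 1) = d ^ (m - 1)" using K by (simp add: mult.commute)
    ultimately show ?thesis
      using g.main[of 0 m n] n unfolding P_def Q_def
      by (simp add: g.al_def g.be_def g.rh_def g.si_def AA_0 GGQ[unfolded Q_def])
  qed
  have part1: "Xi P Q l m =
          cscale (a ^ l * cnj a ^ m * \<Delta> ^ m)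
            (\<Sum>\<gamma>=1..min l m.
               cscale ((- complex_of_real ((cmod b)\<^sup>2 / (cmod a)\<^sup>2)) ^ \<gamma>
                       * of_nat ((l - 1) choose (\<gamma> - 1)) * of_nat ((m - 1) choose (\<gamma> - 1)))
                 (cscale (of_nat (l - \<gamma>) / (a * of_nat \<gamma>)) P
                  + cscale (of_nat (m - \<gamma>) / (\<Delta> * cnj a * of_nat \<gamma>)) Q
                  - cscale (1 / (\<Delta> * cnj b)) R
                  + cscale (1 / b) S))" if lm: "min l m \<ge> 1" for l m
  proof -
    have l1: "l \<ge> 1" and m1: "m \<ge> 1" using lm by auto
    obtain n where n: "l + m = Suc n" using l1 by (cases l) auto
    define e where "e \<gamma> = g.t ^ \<gamma> * of_nat ((l - 1) choose (\<gamma> - 1)) * of_nat ((m - 1) choose (\<gamma> - 1))" for \<gamma>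
    have KK: "a ^ l * cnj a ^ m * \<Delta> ^ m = a ^ l * d ^ m" using K by (simp add: mult.assoc)
    have al: "g.al l m = a ^ l * d ^ m * (\<Sum>\<gamma>=1..min l m. e \<gamma> * (of_nat (l - \<gamma>) / (a * of_nat \<gamma>)))"
    proof -
      have pa: "a ^ l = a * a ^ (l - 1)" using l1 by (cases l) auto
      show ?thesis
        unfolding g.al_def AA_formula[OF l1 m1] e_def sum_distrib_left pa
        using a0 by (intro sum.cong refl) (simp add: field_simps)
    qed
    have be: "g.be l m = a ^ l * d ^ m * (\<Sum>\<gamma>=1..min l m. e \<gamma> * (of_nat (m - \<gamma>) / (\<Delta> * cnj a * of_nat \<gamma>)))"
    proof -
      have pd: "d ^ m = d * d ^ (m - 1)" using m1 by (cases m) auto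
      show ?thesis
        unfolding g.be_def AA_formula[OF m1 l1] e_def sum_distrib_left min.commute[of m l] dD[symmetric] pd
        using d0 by (intro sum.cong refl) (simp add: field_simps)
    qed
    have rh: "g.rh l m = - (a ^ l * d ^ m * (\<Sum>\<gamma>=1..min l m. e \<gamma> * (1 / (\<Delta> * cnj b))))"
    proof -
      have cinv: "1 / (\<Delta> * cnj b) = - (1 / c)" using cD by simp
      have "(\<Sum>\<gamma>=1..min l m. e \<gamma> * (1 / (\<Delta> * cnj b))) = - ((\<Sum>\<gamma>=1..min l m. e \<gamma>) / c)"
        unfolding cinv by (simp add: sum_negf sum_divide_distrib)
      then show ?thesis
        unfolding g.rh_def CC_formula[OF l1 m1] e_def by simp
    qed
    have si: "g.si l m = a ^ l * d ^ m * (\<Sum>\<gamma>=1..min l m. e \<gamma> * (1 / b))"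
    proof -
      have "(\<Sum>\<gamma>=1..min l m. e \<gamma> * (1 / b)) = (\<Sum>\<gamma>=1..min l m. e \<gamma>) / b"
        by (simp add: sum_divide_distrib)
      then show ?thesis
        unfolding g.si_def CC_formula[OF l1 m1] e_def by simp
    qed
    show ?thesis
      unfolding KK P_def Q_def R_def S_def g.lin tt[symmetric] e_def[symmetric]
      using g.main[OF n] al be rh si by simp
  qed
  show ?thesis using part1 part2 part3 by blast
qed

end
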